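(* Let $\gamma$ be a Gutkin curve with contact angle $\alpha$ on the unit sphere $\mathbb{S}^2$, with chord parameterizations $x(t),y(t)$, where $x,y$ are arc-length coordinates on $\gamma$, $\kappa$ is the geodesic curvature of $\gamma$ and $'$ denotes $d/dt$. Then along the family of chords $$\frac{y'(t)}{x'(t)}=\frac{\sqrt{\kappa^2(x(t))+\sin^2\alpha}}{\sqrt{\kappa^2(y(t))+\sin^2\alpha}};$$ equivalently, if $t$ is chosen so that $x'=a/\sqrt{\kappa^2(x)+\sin^2\alpha}$ for a constant $a$, then $y'=a/\sqrt{\kappa^2(y)+\sin^2\alpha}$, so that the values of this parameter at the two endpoints of each chord differ by a constant.
   Context: A smooth convex oriented closed curve $C$ on $\mathbb{S}^2$ is a Gutkin curve with contact angle $\alpha\in(0,\pi]$ if there are parameterizations $x(t),y(t)$ of $C$ with $x'(t),y'(t)>0$, $x(t)\ne y(t)$, such that for every $t$ the geodesic chord from $x(t)$ to $y(t)$ makes angle $\alpha$ with $C$ at both ends: at $x(t)$ the angle between the positively oriented tangent of $C$ and the chord direction towards $y(t)$, and at $y(t)$ the angle between the chord direction (from $x(t)$ towards $y(t)$) and the positively oriented tangent of $C$. *)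

theory Defs
  imports "HOL-Analysis.Analysis"
begin

definition vd :: "(real \<Rightarrow> real^3) \<Rightarrow> real \<Rightarrow> real^3" where
  "vd f t = vector_derivative f (at t)"

definition smooth_curve :: "(real \<Rightarrow> real^3) \<Rightarrow> bool" where
  "smooth_curve g \<longleftrightarrow> (\<forall>k s. ((vd ^^ k) g) differentiable (at s))"

text \<open>Geodesic curvature of a unit-speed curve on the unit sphere:
  kappa = det(g, g', g'') = (g x g') . g''.\<close>
definition geod_curv :: "(real \<Rightarrow> real^3) \<Rightarrow> real \<Rightarrow> real" where
  "geod_curv g s = cross3 (g s) (vd g s) \<bullet> vd (vd g) s"

definition sphere_closed_curve :: "(real \<Rightarrow> real^3) \<Rightarrow> real \<Rightarrow> bool" where
  "sphere_closed_curve g L \<longleftrightarrow> L > 0 \<and> smooth_curve g \<and>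
     (\<forall>s. norm (g s) = 1) \<and> (\<forall>s. norm (vd g s) = 1) \<and>
     (\<forall>s. g (s + L) = g s) \<and> inj_on g {0..<L}"

text \<open>Convex and positively oriented: lies in an open hemisphere and has
  nonnegative geodesic curvature (the enclosed convex region is to the left).\<close>
definition convex_sphere_curve :: "(real \<Rightarrow> real^3) \<Rightarrow> real \<Rightarrow> bool" where
  "convex_sphere_curve g L \<longleftrightarrow> sphere_closed_curve g L \<and>
     (\<exists>n. \<forall>s. g s \<bullet> n > 0) \<and> (\<forall>s. geod_curv g s \<ge> 0)"

definition vec_angle :: "real^3 \<Rightarrow> real^3 \<Rightarrow> real" where
  "vec_angle u v = arccos ((u \<bullet> v) / (norm u * norm v))"

text \<open>Unit tangent at p of the minimizing great-circle arc from p to q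
  (p, q on S^2, not antipodal), pointing towards q.\<close>
definition chord_dir_start :: "real^3 \<Rightarrow> real^3 \<Rightarrow> real^3" where
  "chord_dir_start p q = (1 / norm (q - (p \<bullet> q) *\<^sub>R p)) *\<^sub>R (q - (p \<bullet> q) *\<^sub>R p)"

text \<open>Unit tangent at q of the arc from p to q, pointing in the direction of
  travel from p towards q (i.e. away from p).\<close>
definition chord_dir_end :: "real^3 \<Rightarrow> real^3 \<Rightarrow> real^3" where
  "chord_dir_end p q = - chord_dir_start q p"

definition gutkin :: "(real \<Rightarrow> real^3) \<Rightarrow> real \<Rightarrow> real \<Rightarrow> (real \<Rightarrow> real) \<Rightarrow> (real \<Rightarrow> real) \<Rightarrow> bool" where
  "gutkin g L \<alpha> x y \<longleftrightarrow> convex_sphere_curve g L \<and> 0 < \<alpha> \<and> \<alpha> \<le> pi \<and>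
     (\<forall>t. x differentiable (at t) \<and> y differentiable (at t) \<and> deriv x t > 0 \<and> deriv y t > 0) \<and>
     range (g \<circ> x) = range g \<and> range (g \<circ> y) = range g \<and>
     (\<forall>t. g (x t) \<noteq> g (y t)) \<and>
     (\<forall>t. vec_angle (vd g (x t)) (chord_dir_start (g (x t)) (g (y t))) = \<alpha> \<and>
          vec_angle (chord_dir_end (g (x t)) (g (y t))) (vd g (y t)) = \<alpha>)"

end

theory Submission
  imports Defs
begin

lemma cramer3: fixes a b c v :: "real^3"
  shows "(a \<bullet> cross3 b c) *\<^sub>R v = (v \<bullet> cross3 b c) *\<^sub>R a + (v \<bullet> cross3 c a) *\<^sub>R b + (v \<bullet> cross3 a b) *\<^sub>R c"
  unfolding cross3_def inner_vec_def vec_eq_iff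
  by (auto simp: sum_3 forall_3 vector_def algebra_simps)
lemma bac: fixes a b c :: "real^3"
  shows "cross3 a (cross3 b c) = (a \<bullet> c) *\<^sub>R b - (a \<bullet> b) *\<^sub>R c"
  unfolding cross3_def inner_vec_def vec_eq_iff
  by (auto simp: sum_3 forall_3 vector_def algebra_simps)
lemma cross_anti: fixes a b :: "real^3" shows "cross3 a b = - cross3 b a"
  by (rule cross_skew)
lemma gramdet: fixes a b c d e f :: "real^3"
  shows "(cross3 a b \<bullet> c) * (cross3 d e \<bullet> f) =
   (a\<bullet>d)*((b\<bullet>e)*(c\<bullet>f) - (b\<bullet>f)*(c\<bullet>e)) - (a\<bullet>e)*((b\<bullet>d)*(c\<bullet>f) - (b\<bullet>f)*(c\<bullet>d)) + (a\<bullet>f)*((b\<bullet>d)*(c\<bullet>e) - (b\<bullet>e)*(c\<bullet>d))"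
  unfolding cross3_def inner_vec_def 
  by (simp add: sum_3 vector_def algebra_simps)

lemma frame: fixes a b v :: "real^3"
  assumes "a \<bullet> a = 1" "b \<bullet> b = 1" "a \<bullet> b = 0"
  shows "v = (v \<bullet> a) *\<^sub>R a + (v \<bullet> b) *\<^sub>R b + (v \<bullet> cross3 a b) *\<^sub>R cross3 a b"
proof -
  have 1: "cross3 b (cross3 a b) = a"
    using assms by (simp add: bac inner_commute)
  have 2: "cross3 (cross3 a b) a = b"
    using assms by (subst cross_anti) (simp add: bac inner_commute)
  have 3: "a \<bullet> cross3 b (cross3 a b) = 1" using 1 assms by simp
  show ?thesis using cramer3[of a b "cross3 a b" v] 1 2 3 by simp
qed

lemma frame_inner: fixes a b v w :: "real^3"
  assumes "a \<bullet> a = 1" "b \<bullet> b = 1" "a \<bullet> b = 0"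
  shows "v \<bullet> w = (v \<bullet> a) * (w \<bullet> a) + (v \<bullet> b) * (w \<bullet> b) + (v \<bullet> cross3 a b) * (w \<bullet> cross3 a b)"
proof -
  have "v \<bullet> w = ((v \<bullet> a) *\<^sub>R a + (v \<bullet> b) *\<^sub>R b + (v \<bullet> cross3 a b) *\<^sub>R cross3 a b) \<bullet> w"
    using frame[OF assms, of v] by simp
  thus ?thesis by (simp add: inner_add_left inner_commute[of a w] inner_commute[of b w] inner_commute[of "cross3 a b" w])
qed

lemma sign_split: fixes n m :: real assumes "n^2 = m^2" obtains "n = m" | "n = -m"
  using assms by (metis power2_eq_iff)

lemma core_alg:
  fixes c r pa qa xp yp w n1 n2 kP kQ :: real
  assumes r: "r > 0" "r^2 = 1 - c^2" and qa: "qa > 0" "qa^2 + pa^2 = 1"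
    and xp: "xp > 0" and yp: "yp > 0"
    and n1: "n1^2 = (r*qa)^2" and n2: "n2^2 = (r*qa)^2"
    and w: "n1*n2 = c^2*w + r*pa*(r*pa*c) - w"
    and D1: "xp*(-c + kP*n1) + yp*w + pa*c*pa*(xp - yp) = 0"
    and D2: "xp*w + yp*(-c + kQ*n2) - pa*c*pa*(xp - yp) = 0"
  shows "yp^2*(kQ^2 + qa^2) = xp^2*(kP^2 + qa^2)"
proof -
  obtain \<sigma> where sg: "\<sigma>^2 = 1" "n1 = \<sigma>*r*qa"
  proof -
    from n1 have "n1 = r*qa \<or> n1 = -(r*qa)" by (metis power2_eq_iff power_mult_distrib)
    thus ?thesis using that[of 1] that[of "-1"] by auto
  qed
  obtain \<tau> where tg: "\<tau>^2 = 1" "n2 = \<tau>*r*qa"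
  proof -
    from n2 have "n2 = r*qa \<or> n2 = -(r*qa)" by (metis power2_eq_iff power_mult_distrib)
    thus ?thesis using that[of 1] that[of "-1"] by auto
  qed
  have ww: "w = c*pa^2 - \<sigma>*\<tau>*qa^2"
  proof -
    have h: "r^2*w = w - c^2*w"
    proof -
      have "(c^2 + r^2)*w = w" using r(2) by simp
      thus ?thesis by (simp add: algebra_simps)
    qed
    have "r^2 * w = r^2*(c*pa^2 - \<sigma>*\<tau>*qa^2)"
      using w sg(2) tg(2) h by (simp add: algebra_simps power2_eq_square)
    thus ?thesis using r(1) by simp
  qed
  define KP where "KP = \<sigma>*kP"
  define KQ where "KQ = \<tau>*kQ"
  define A where "A = -c*qa + KP*r"
  define B where "B = -c*qa + KQ*r"
  have e1: "xp*A = \<sigma>*\<tau>*qa*yp"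
  proof -
    have "qa*(xp*A) = qa*(\<sigma>*\<tau>*qa*yp)"
      using D1 unfolding ww sg(2) A_def KP_def
      using qa(2) by algebra
    thus ?thesis using qa(1) by simp
  qed
  have e2: "yp*B = \<sigma>*\<tau>*qa*xp"
  proof -
    have "qa*(yp*B) = qa*(\<sigma>*\<tau>*qa*xp)"
      using D2 unfolding ww tg(2) B_def KQ_def
      using qa(2) by algebra
    thus ?thesis using qa(1) by simp
  qed
  have st: "(\<sigma>*\<tau>)^2 = 1" using sg tg by (simp add: power_mult_distrib)
  have AB: "A*B = qa^2"
  proof -
    have "(xp*yp)*(A*B) = (xp*A)*(yp*B)" by simp
    also have "\<dots> = (\<sigma>*\<tau>)^2*qa^2*(xp*yp)" using e1 e2 by (simp add: power2_eq_square)
    finally show ?thesis using st xp yp by simp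
  qed
  have An: "A \<noteq> 0" using AB qa by auto
  have br: "c*qa*(KP+KQ) - r*KP*KQ = - (r*qa^2)"
  proof -
    have eqn: "r*(c*qa*(KP+KQ) - r*KP*KQ) = r*(- (r*qa^2))"
      using AB unfolding A_def B_def using r(2) qa(2)
      by algebra
    have nz: "r \<noteq> 0" using r(1) by simp
    show ?thesis using mult_left_cancel[OF nz, THEN iffD1, OF eqn] .
  qed
  have idn: "A*(KQ^2+qa^2) = B*(KP^2+qa^2)"
  proof -
    have "A*(KQ^2+qa^2) - B*(KP^2+qa^2) = (KP-KQ)*(c*qa*(KP+KQ) - r*KP*KQ + r*qa^2)"
      unfolding A_def B_def by (simp add: algebra_simps power2_eq_square)
    thus ?thesis using br by simp
  qed
  have KP2: "KP^2 = kP^2" unfolding KP_def using sg by (simp add: power_mult_distrib)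
  have KQ2: "KQ^2 = kQ^2" unfolding KQ_def using tg by (simp add: power_mult_distrib)
  have "qa^2*yp^2 = A^2*xp^2"
  proof -
    have "(qa*yp)^2 = (\<sigma>*\<tau>)^2*(qa*yp)^2" using st by simp
    also have "\<dots> = (xp*A)^2" using e1 by (simp add: power_mult_distrib)
    finally show ?thesis by (simp add: power_mult_distrib algebra_simps)
  qed
  hence "qa^2*(yp^2*(kQ^2 + qa^2)) = A^2*xp^2*(KQ^2+qa^2)" using KQ2 by simp
  also have "\<dots> = xp^2*A*(B*(KP^2+qa^2))" using idn by (simp add: power2_eq_square)
  also have "\<dots> = (A*B)*(xp^2*(kP^2+qa^2))" using KP2 by (simp add: algebra_simps)
  also have "\<dots> = qa^2*(xp^2*(kP^2+qa^2))" using AB by simp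
  finally show ?thesis using qa by simp
qed

lemma geo_core:
  fixes P TP GP Q TQ GQ :: "real^3" and s pa qa xp yp :: real
  assumes u: "P \<bullet> P = 1" "TP \<bullet> TP = 1" "P \<bullet> TP = 0" "Q \<bullet> Q = 1" "TQ \<bullet> TQ = 1" "Q \<bullet> TQ = 0"
      "GP \<bullet> TP = 0" "GP \<bullet> P = -1" "GQ \<bullet> TQ = 0" "GQ \<bullet> Q = -1"
    and s: "s > 0" "s^2 = 1 - (P \<bullet> Q)^2"
    and qa: "qa > 0" "qa^2 + pa^2 = 1"
    and C1: "TP \<bullet> Q = s * pa" and C2: "P \<bullet> TQ = - (s * pa)"
    and xp: "xp > 0" and yp: "yp > 0"
    and D1: "xp*(GP \<bullet> Q) + yp*(TP \<bullet> TQ) + pa*(P \<bullet> Q)*pa*(xp - yp) = 0"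
    and D2: "xp*(TP \<bullet> TQ) + yp*(P \<bullet> GQ) - pa*(P \<bullet> Q)*pa*(xp - yp) = 0"
  shows "yp^2*((cross3 Q TQ \<bullet> GQ)^2 + qa^2) = xp^2*((cross3 P TP \<bullet> GP)^2 + qa^2)"
proof -
  define c where "c = P \<bullet> Q"
  define n1 where "n1 = cross3 P TP \<bullet> Q"
  define n2 where "n2 = cross3 Q TQ \<bullet> P"
  define kP where "kP = cross3 P TP \<bullet> GP"
  define kQ where "kQ = cross3 Q TQ \<bullet> GQ"
  have fP: "v \<bullet> w = (v \<bullet> P) * (w \<bullet> P) + (v \<bullet> TP) * (w \<bullet> TP) + (v \<bullet> cross3 P TP) * (w \<bullet> cross3 P TP)" for v w
    by (rule frame_inner) (use u in auto)
  have fQ: "v \<bullet> w = (v \<bullet> Q) * (w \<bullet> Q) + (v \<bullet> TQ) * (w \<bullet> TQ) + (v \<bullet> cross3 Q TQ) * (w \<bullet> cross3 Q TQ)" for v w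
    by (rule frame_inner) (use u in auto)
  have GPQ: "GP \<bullet> Q = -c + kP*n1"
    using fP[of GP Q] u unfolding c_def kP_def n1_def by (simp add: inner_commute)
  have PGQ: "P \<bullet> GQ = -c + kQ*n2"
    using fQ[of GQ P] u unfolding c_def kQ_def n2_def by (simp add: inner_commute)
  have n1sq: "n1^2 = (s*qa)^2"
  proof -
    have "1 = c^2 + (s*pa)^2 + n1^2"
      using fP[of Q Q] u C1 unfolding c_def n1_def by (simp add: inner_commute power2_eq_square)
    thus ?thesis using s(2) qa(2) unfolding c_def by algebra
  qed
  have n2sq: "n2^2 = (s*qa)^2"
  proof -
    have "1 = c^2 + (s*pa)^2 + n2^2"
      using fQ[of P P] u C2 unfolding c_def n2_def by (simp add: inner_commute power2_eq_square)
    thus ?thesis using s(2) qa(2) unfolding c_def by algebra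
  qed
  have w: "n1*n2 = c^2*(TP \<bullet> TQ) + s*pa*(s*pa*c) - (TP \<bullet> TQ)"
    using gramdet[of P TP Q Q TQ P] u C1 C2 unfolding n1_def n2_def c_def
    by (simp add: inner_commute algebra_simps power2_eq_square)
  have h1: "s^2 = 1 - c^2" using s unfolding c_def by simp
  have h2: "xp * (- c + kP * n1) + yp * (TP \<bullet> TQ) + pa * c * pa * (xp - yp) = 0"
      using D1 GPQ unfolding c_def by simp
  have h3: "xp * (TP \<bullet> TQ) + yp * (- c + kQ * n2) - pa * c * pa * (xp - yp) = 0"
      using D2 PGQ unfolding c_def by simp
  have "yp^2*(kQ^2 + qa^2) = xp^2*(kP^2 + qa^2)"
    by (rule core_alg[OF s(1) h1 qa xp yp n1sq n2sq w h2 h3])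
  thus ?thesis unfolding kP_def kQ_def .
qed

lemma inner_vd:
  fixes f h :: "real \<Rightarrow> real^3"
  assumes "(f has_vector_derivative f') (at t)" "(h has_vector_derivative h') (at t)"
  shows "((\<lambda>u. f u \<bullet> h u) has_real_derivative (f t \<bullet> h' + f' \<bullet> h t)) (at t)"
  using bounded_bilinear.has_vector_derivative[OF bounded_bilinear_inner assms]
  by (simp add: has_real_derivative_iff_has_vector_derivative)

lemma deriv_zero_of_const:
  fixes F :: "real \<Rightarrow> real"
  assumes "(F has_real_derivative D) (at t)" "\<And>u. F u = k"
  shows "D = 0"
proof -
  have "F = (\<lambda>u. k)" using assms(2) by auto
  hence "(F has_real_derivative 0) (at t)" by simp
  thus ?thesis using assms(1) DERIV_unique by blast
qed

lemma inner_const_deriv: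
  fixes f h :: "real \<Rightarrow> real^3"
  assumes "(f has_vector_derivative f') (at t)" "(h has_vector_derivative h') (at t)"
    "\<And>u. f u \<bullet> h u = k"
  shows "f t \<bullet> h' + f' \<bullet> h t = 0"
  by (rule deriv_zero_of_const[OF inner_vd[OF assms(1,2)] assms(3)])

lemma chain_x:
  fixes g :: "real \<Rightarrow> real^3" and x :: "real \<Rightarrow> real"
  assumes "(x has_real_derivative xp) (at t)" "(g has_vector_derivative G) (at (x t))"
  shows "((\<lambda>u. g (x u)) has_vector_derivative (xp *\<^sub>R G)) (at t)"
  using vector_diff_chain_at[OF assms(1)[unfolded has_real_derivative_iff_has_vector_derivative] assms(2)]
  by (simp add: o_def)

lemma unit_eq: fixes A B :: "real^3"
  assumes "A \<bullet> A = 1" "B \<bullet> B = 1" "A \<bullet> B = 1" shows "A = B"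
proof -
  have "(A - B) \<bullet> (A - B) = 0" using assms by (simp add: inner_diff inner_commute)
  thus ?thesis by simp
qed

lemma cs_unit: fixes A B :: "real^3"
  assumes "A \<bullet> A = 1" "B \<bullet> B = 1" shows "\<bar>A \<bullet> B\<bar> \<le> 1"
proof -
  have "norm A = 1" "norm B = 1" using assms by (simp_all add: norm_eq_sqrt_inner)
  thus ?thesis using Cauchy_Schwarz_ineq2[of A B] by simp
qed

lemma chord_props:
  fixes A B V :: "real^3"
  assumes "A \<bullet> A = 1" "B \<bullet> B = 1" "s = sqrt (1 - (A \<bullet> B)^2)" "s > 0"
  shows "norm (chord_dir_start A B) = 1"
    "V \<bullet> A = 0 \<Longrightarrow> V \<bullet> chord_dir_start A B = (V \<bullet> B) / s"
proof -
  have "(B - (A \<bullet> B) *\<^sub>R A) \<bullet> (B - (A \<bullet> B) *\<^sub>R A) = 1 - (A \<bullet> B)^2"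
    using assms(1,2) by (simp add: inner_diff inner_commute power2_eq_square algebra_simps)
  hence n: "norm (B - (A \<bullet> B) *\<^sub>R A) = s" using assms(3) by (simp add: norm_eq_sqrt_inner)
  show "norm (chord_dir_start A B) = 1"
    unfolding chord_dir_start_def using n assms(4) by simp
  show "V \<bullet> chord_dir_start A B = (V \<bullet> B) / s" if "V \<bullet> A = 0"
    unfolding chord_dir_start_def using n that by (simp add: inner_diff_right)
qed

lemma angle_val:
  fixes U V :: "real^3"
  assumes "norm U = 1" "norm V = 1" "vec_angle U V = \<alpha>"
  shows "U \<bullet> V = cos \<alpha>"
proof -
  have "\<bar>U \<bullet> V\<bar> \<le> 1" using Cauchy_Schwarz_ineq2[of U V] assms by simp
  thus ?thesis using assms unfolding vec_angle_def by auto
qed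


lemma basic_facts:
  assumes "sphere_closed_curve g L"
  shows "\<And>s. (g has_vector_derivative vd g s) (at s)"
    "\<And>s. (vd g has_vector_derivative vd (vd g) s) (at s)"
    "\<And>s. g s \<bullet> g s = 1" "\<And>s. vd g s \<bullet> vd g s = 1" "\<And>s. g s \<bullet> vd g s = 0"
    "\<And>s. vd (vd g) s \<bullet> vd g s = 0" "\<And>s. vd (vd g) s \<bullet> g s = -1"
proof -
  have sm: "smooth_curve g" and n1: "\<And>s. norm (g s) = 1" and n2: "\<And>s. norm (vd g s) = 1"
    using assms unfolding sphere_closed_curve_def by auto
  have d0: "g differentiable (at s)" for s using sm unfolding smooth_curve_def
    by (metis funpow_0)
  have d1: "vd g differentiable (at s)" for s using sm unfolding smooth_curve_def
    by (metis One_nat_def funpow.simps comp_id funpow_0 o_apply)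
  show hg: "(g has_vector_derivative vd g s) (at s)" for s
    using d0 vector_derivative_works unfolding vd_def by blast
  show hT: "(vd g has_vector_derivative vd (vd g) s) (at s)" for s
    using d1 vector_derivative_works unfolding vd_def[of "vd g"] by blast
  show gg: "g s \<bullet> g s = 1" for s using n1[of s] by (simp add: norm_eq_sqrt_inner)
  show TT: "vd g s \<bullet> vd g s = 1" for s using n2[of s] by (simp add: norm_eq_sqrt_inner)
  show gT: "g s \<bullet> vd g s = 0" for s
    using inner_const_deriv[OF hg hg gg] by (simp add: inner_commute)
  show "vd (vd g) s \<bullet> vd g s = 0" for s
    using inner_const_deriv[OF hT hT TT] by (simp add: inner_commute)
  show "vd (vd g) s \<bullet> g s = -1" for s
  proof -
    have "g s \<bullet> vd (vd g) s + vd g s \<bullet> vd g s = 0"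
      using inner_const_deriv[OF hg[of s] hT[of s] gT] by (simp add: inner_commute)
    thus ?thesis using TT[of s] by (simp add: inner_commute)
  qed
qed

lemma chord_facts:
  assumes G: "gutkin g L \<alpha> x y"
  shows "(g (x t) \<bullet> g (y t))^2 < 1"
    "vd g (x t) \<bullet> g (y t) = sqrt (1 - (g (x t) \<bullet> g (y t))^2) * cos \<alpha>"
    "g (x t) \<bullet> vd g (y t) = - (sqrt (1 - (g (x t) \<bullet> g (y t))^2) * cos \<alpha>)"
proof -
  have sc: "sphere_closed_curve g L" using G unfolding gutkin_def convex_sphere_curve_def by auto
  note bf = basic_facts[OF sc]
  obtain n where hn: "\<And>s. g s \<bullet> n > 0" using G unfolding gutkin_def convex_sphere_curve_def by auto
  define P where "P = g (x t)"
  define Q where "Q = g (y t)"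
  define c where "c = P \<bullet> Q"
  have PP: "P \<bullet> P = 1" "Q \<bullet> Q = 1" unfolding P_def Q_def using bf by auto
  have ne: "P \<noteq> Q" using G unfolding gutkin_def P_def Q_def by auto
  have c1: "c \<noteq> 1" using unit_eq[OF PP] ne unfolding c_def by auto
  have c2: "c \<noteq> -1"
  proof
    assume "c = -1"
    hence "(-P) \<bullet> Q = 1" unfolding c_def by simp
    hence "-P = Q" using unit_eq[of "-P" Q] PP by simp
    moreover have "P \<bullet> n > 0" "Q \<bullet> n > 0" unfolding P_def Q_def using hn by auto
    ultimately show False by (smt (verit) inner_minus_left)
  qed
  have "\<bar>c\<bar> \<le> 1" using cs_unit[OF PP] unfolding c_def .
  hence "\<bar>c\<bar> < 1" using c1 c2 by auto
  hence "c^2 < 1" by (simp add: abs_square_less_1)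
  thus cc: "(g (x t) \<bullet> g (y t))^2 < 1" unfolding c_def P_def Q_def .
  define s where "s = sqrt (1 - c^2)"
  have s0: "s > 0" unfolding s_def using \<open>c^2 < 1\<close> by simp
  have ang1: "vec_angle (vd g (x t)) (chord_dir_start P Q) = \<alpha>"
    and ang2: "vec_angle (chord_dir_end P Q) (vd g (y t)) = \<alpha>"
    using G unfolding gutkin_def P_def Q_def by auto
  have nT: "norm (vd g s) = 1" for s using bf(4)[of s] by (simp add: norm_eq_sqrt_inner)
  have cp1: "norm (chord_dir_start P Q) = 1"
    "vd g (x t) \<bullet> chord_dir_start P Q = (vd g (x t) \<bullet> Q) / s"
  proof -
    have o: "vd g (x t) \<bullet> P = 0" using bf(5)[of "x t"] unfolding P_def by (simp add: inner_commute)
    show "norm (chord_dir_start P Q) = 1" by (rule chord_props(1)[OF PP s_def[unfolded c_def] s0])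
    show "vd g (x t) \<bullet> chord_dir_start P Q = (vd g (x t) \<bullet> Q) / s"
      by (rule chord_props(2)[OF PP s_def[unfolded c_def] s0 o])
  qed
  have "vd g (x t) \<bullet> chord_dir_start P Q = cos \<alpha>"
    by (rule angle_val[OF nT cp1(1) ang1])
  thus "vd g (x t) \<bullet> g (y t) = sqrt (1 - (g (x t) \<bullet> g (y t))^2) * cos \<alpha>"
    using cp1(2) s0 unfolding s_def c_def P_def Q_def by (simp add: field_simps)
  have s': "s = sqrt (1 - (Q \<bullet> P)^2)" unfolding s_def c_def by (simp add: inner_commute)
  have cp2: "norm (chord_dir_start Q P) = 1"
    "vd g (y t) \<bullet> chord_dir_start Q P = (vd g (y t) \<bullet> P) / s"
  proof -
    have o: "vd g (y t) \<bullet> Q = 0" using bf(5)[of "y t"] unfolding Q_def by (simp add: inner_commute)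
    show "norm (chord_dir_start Q P) = 1" by (rule chord_props(1)[OF PP(2) PP(1) s' s0])
    show "vd g (y t) \<bullet> chord_dir_start Q P = (vd g (y t) \<bullet> P) / s"
      by (rule chord_props(2)[OF PP(2) PP(1) s' s0 o])
  qed
  have "chord_dir_end P Q \<bullet> vd g (y t) = cos \<alpha>"
    by (rule angle_val[OF _ nT ang2]) (simp add: chord_dir_end_def cp2(1))
  hence "- (vd g (y t) \<bullet> chord_dir_start Q P) = cos \<alpha>"
    unfolding chord_dir_end_def by (simp add: inner_commute)
  thus "g (x t) \<bullet> vd g (y t) = - (sqrt (1 - (g (x t) \<bullet> g (y t))^2) * cos \<alpha>)"
    using cp2(2) s0 unfolding s_def c_def P_def Q_def by (simp add: field_simps inner_commute)
qed


lemma gen_case: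
  assumes G: "gutkin g L \<alpha> x y" and ap: "\<alpha> < pi"
  shows "(deriv y t)^2 * ((geod_curv g (y t))^2 + (sin \<alpha>)^2) =
         (deriv x t)^2 * ((geod_curv g (x t))^2 + (sin \<alpha>)^2)"
proof -
  have sc: "sphere_closed_curve g L" using G unfolding gutkin_def convex_sphere_curve_def by auto
  note bf = basic_facts[OF sc]
  have a0: "0 < \<alpha>" using G unfolding gutkin_def by auto
  have dx: "x differentiable (at t)" "y differentiable (at t)" and xp: "deriv x t > 0" and yp: "deriv y t > 0"
    using G unfolding gutkin_def by auto
  have hx: "(x has_real_derivative deriv x t) (at t)" using dx(1) DERIV_deriv_iff_real_differentiable by blast
  have hy: "(y has_real_derivative deriv y t) (at t)" using dx(2) DERIV_deriv_iff_real_differentiable by blast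
  define xd where "xd = deriv x t"
  define yd where "yd = deriv y t"
  define P where "P = g (x t)"
  define Q where "Q = g (y t)"
  define TP where "TP = vd g (x t)"
  define TQ where "TQ = vd g (y t)"
  define GP where "GP = vd (vd g) (x t)"
  define GQ where "GQ = vd (vd g) (y t)"
  define c where "c = P \<bullet> Q"
  define s where "s = sqrt (1 - c^2)"
  define ca where "ca = cos \<alpha>"
  note cf = chord_facts[OF G]
  have c1: "c^2 < 1" using cf(1)[of t] unfolding c_def P_def Q_def .
  have s0: "s > 0" unfolding s_def using c1 by simp
  have C1: "TP \<bullet> Q = s * ca" using cf(2)[of t] unfolding TP_def Q_def s_def c_def P_def ca_def .
  have C2: "P \<bullet> TQ = - (s * ca)" using cf(3)[of t] unfolding TQ_def Q_def s_def c_def P_def ca_def .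
  have hP: "((\<lambda>u. g (x u)) has_vector_derivative (xd *\<^sub>R TP)) (at t)"
    unfolding xd_def TP_def by (rule chain_x[OF hx bf(1)])
  have hQ: "((\<lambda>u. g (y u)) has_vector_derivative (yd *\<^sub>R TQ)) (at t)"
    unfolding yd_def TQ_def by (rule chain_x[OF hy bf(1)])
  have hTP: "((\<lambda>u. vd g (x u)) has_vector_derivative (xd *\<^sub>R GP)) (at t)"
    unfolding xd_def GP_def by (rule chain_x[OF hx bf(2)])
  have hTQ: "((\<lambda>u. vd g (y u)) has_vector_derivative (yd *\<^sub>R GQ)) (at t)"
    unfolding yd_def GQ_def by (rule chain_x[OF hy bf(2)])
  define c' where "c' = xd * (TP \<bullet> Q) + yd * (P \<bullet> TQ)"
  have hc: "((\<lambda>u. g (x u) \<bullet> g (y u)) has_real_derivative c') (at t)"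
    using inner_vd[OF hP hQ] unfolding c'_def P_def Q_def by (simp add: algebra_simps)
  have hq: "((\<lambda>u. 1 - (g (x u) \<bullet> g (y u))^2) has_real_derivative (- (2 * c * c'))) (at t)"
    using hc unfolding c_def P_def Q_def by (auto intro!: derivative_eq_intros)
  have hs: "((\<lambda>u. sqrt (1 - (g (x u) \<bullet> g (y u))^2)) has_real_derivative
      (inverse (sqrt (1 - c^2)) / 2 * (- (2 * c * c')))) (at t)"
    using DERIV_chain'[OF hq DERIV_real_sqrt] c1 unfolding c_def P_def Q_def by simp
  have c'v: "c' = s * ca * (xd - yd)" unfolding c'_def using C1 C2 by (simp add: algebra_simps)
  have sq: "inverse (sqrt (1 - c^2)) / 2 * (- (2 * c * c')) = - (c * ca * (xd - yd))"
    using s0 unfolding c'v s_def[symmetric] by (simp add: field_simps)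
  have hs': "((\<lambda>u. sqrt (1 - (g (x u) \<bullet> g (y u))^2)) has_real_derivative (- (c * ca * (xd - yd)))) (at t)"
    using hs unfolding sq .
  have D1: "xd*(GP \<bullet> Q) + yd*(TP \<bullet> TQ) + ca*c*ca*(xd - yd) = 0"
  proof -
    have h1: "((\<lambda>u. vd g (x u) \<bullet> g (y u) - cos \<alpha> * sqrt (1 - (g (x u) \<bullet> g (y u))^2)) has_real_derivative
       ((TP \<bullet> (yd *\<^sub>R TQ) + (xd *\<^sub>R GP) \<bullet> Q) - cos \<alpha> * (- (c * ca * (xd - yd))))) (at t)"
      using DERIV_diff[OF inner_vd[OF hTP hQ] DERIV_cmult[OF hs', of "cos \<alpha>"]]
      unfolding TP_def Q_def by simp
    have "(TP \<bullet> (yd *\<^sub>R TQ) + (xd *\<^sub>R GP) \<bullet> Q) - cos \<alpha> * (- (c * ca * (xd - yd))) = 0"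
      by (rule deriv_zero_of_const[OF h1]) (use cf(2) in simp)
    thus ?thesis unfolding ca_def by (simp add: algebra_simps)
  qed
  have D2: "xd*(TP \<bullet> TQ) + yd*(P \<bullet> GQ) - ca*c*ca*(xd - yd) = 0"
  proof -
    have h1: "((\<lambda>u. g (x u) \<bullet> vd g (y u) + cos \<alpha> * sqrt (1 - (g (x u) \<bullet> g (y u))^2)) has_real_derivative
       ((P \<bullet> (yd *\<^sub>R GQ) + (xd *\<^sub>R TP) \<bullet> TQ) + cos \<alpha> * (- (c * ca * (xd - yd))))) (at t)"
      using DERIV_add[OF inner_vd[OF hP hTQ] DERIV_cmult[OF hs', of "cos \<alpha>"]]
      unfolding P_def TQ_def by simp
    have "(P \<bullet> (yd *\<^sub>R GQ) + (xd *\<^sub>R TP) \<bullet> TQ) + cos \<alpha> * (- (c * ca * (xd - yd))) = 0"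
      by (rule deriv_zero_of_const[OF h1]) (use cf(3) in simp)
    thus ?thesis unfolding ca_def by (simp add: algebra_simps)
  qed
  have sa: "sin \<alpha> > 0" using a0 ap by (simp add: sin_gt_zero)
  have sa2: "(sin \<alpha>)^2 + ca^2 = 1" unfolding ca_def by simp
  have "yd^2*((cross3 Q TQ \<bullet> GQ)^2 + (sin \<alpha>)^2) = xd^2*((cross3 P TP \<bullet> GP)^2 + (sin \<alpha>)^2)"
  proof (rule geo_core[OF _ _ _ _ _ _ _ _ _ _ s0 _ sa sa2 C1 C2])
  qed (use bf xp yp D1 D2 s_def c_def c1 in \<open>auto simp: P_def Q_def TP_def TQ_def GP_def GQ_def xd_def yd_def\<close>)
  thus ?thesis unfolding geod_curv_def P_def Q_def TP_def TQ_def GP_def GQ_def xd_def yd_def .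
qed


lemma pi_n1:
  assumes G: "gutkin g L pi x y"
  shows "cross3 (g (x t)) (vd g (x t)) \<bullet> g (y t) = 0"
proof -
  have sc: "sphere_closed_curve g L" using G unfolding gutkin_def convex_sphere_curve_def by auto
  note bf = basic_facts[OF sc]
  note cf = chord_facts[OF G]
  define P where "P = g (x t)"
  define Q where "Q = g (y t)"
  define TP where "TP = vd g (x t)"
  define c where "c = P \<bullet> Q"
  define s where "s = sqrt (1 - c^2)"
  have c1: "c^2 < 1" using cf(1)[of t] unfolding c_def P_def Q_def .
  have s2: "s^2 = 1 - c^2" unfolding s_def using c1 by simp
  have C1: "TP \<bullet> Q = - s" using cf(2)[of t] unfolding TP_def Q_def s_def c_def P_def by simp
  have "Q \<bullet> Q = (Q \<bullet> P) * (Q \<bullet> P) + (Q \<bullet> TP) * (Q \<bullet> TP) + (Q \<bullet> cross3 P TP) * (Q \<bullet> cross3 P TP)"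
    by (rule frame_inner) (use bf in \<open>auto simp: P_def TP_def\<close>)
  hence "(Q \<bullet> cross3 P TP)^2 = 0"
    using bf(3)[of "y t"] C1 s2 unfolding c_def Q_def
    by (simp add: inner_commute power2_eq_square)
  thus ?thesis unfolding P_def TP_def Q_def by (simp add: inner_commute)
qed

lemma pi_kappa:
  assumes G: "gutkin g L pi x y"
  shows "geod_curv g (x t) = 0"
proof -
  have sc: "sphere_closed_curve g L" using G unfolding gutkin_def convex_sphere_curve_def by auto
  note bf = basic_facts[OF sc]
  note cf = chord_facts[OF G]
  have dx: "x differentiable (at t)" "y differentiable (at t)" and xp: "deriv x t > 0" and yp: "deriv y t > 0"
    using G unfolding gutkin_def by auto
  have hx: "(x has_real_derivative deriv x t) (at t)" using dx(1) DERIV_deriv_iff_real_differentiable by blast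
  have hy: "(y has_real_derivative deriv y t) (at t)" using dx(2) DERIV_deriv_iff_real_differentiable by blast
  define xd where "xd = deriv x t"
  define yd where "yd = deriv y t"
  define P where "P = g (x t)"
  define Q where "Q = g (y t)"
  define TP where "TP = vd g (x t)"
  define TQ where "TQ = vd g (y t)"
  define GP where "GP = vd (vd g) (x t)"
  define N0 where "N0 = cross3 P TP"
  define c where "c = P \<bullet> Q"
  define s where "s = sqrt (1 - c^2)"
  have c1: "c^2 < 1" using cf(1)[of t] unfolding c_def P_def Q_def .
  have s0: "s > 0" unfolding s_def using c1 by simp
  have s2: "s^2 = 1 - c^2" unfolding s_def using c1 by simp
  have C1: "TP \<bullet> Q = - s" using cf(2)[of t] unfolding TP_def Q_def s_def c_def P_def by simp
  have C2: "P \<bullet> TQ = s" using cf(3)[of t] unfolding TQ_def Q_def s_def c_def P_def by simp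
  have orth: "P \<bullet> P = 1" "TP \<bullet> TP = 1" "P \<bullet> TP = 0" using bf unfolding P_def TP_def by auto
  have fP: "v \<bullet> w = (v \<bullet> P) * (w \<bullet> P) + (v \<bullet> TP) * (w \<bullet> TP) + (v \<bullet> N0) * (w \<bullet> N0)" for v w
    unfolding N0_def by (rule frame_inner[OF orth])
  have n1: "Q \<bullet> N0 = 0" using pi_n1[OF G, of t] unfolding N0_def P_def TP_def Q_def by (simp add: inner_commute)
  have w: "TP \<bullet> TQ = c"
  proof -
    have "Q \<bullet> TQ = 0" using bf(5)[of "y t"] unfolding Q_def TQ_def .
    hence "0 = c * s - s * (TP \<bullet> TQ)" using fP[of Q TQ] n1 C1 C2 unfolding c_def
      by (simp add: inner_commute)
    hence "s * (TP \<bullet> TQ) = s * c" by (simp add: algebra_simps)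
    thus ?thesis using s0 by simp
  qed
  have tn: "TQ \<bullet> N0 = 0"
  proof -
    have "1 = s^2 + c^2 + (TQ \<bullet> N0)^2" using fP[of TQ TQ] bf(4)[of "y t"] C2 w
      unfolding TQ_def[symmetric] by (simp add: inner_commute power2_eq_square)
    thus ?thesis using s2 by simp
  qed
  define k where "k u = g (y u) \<bullet> N0 - (g (x u) \<bullet> g (y u)) * (g (x u) \<bullet> N0)
     - (vd g (x u) \<bullet> g (y u)) * (vd g (x u) \<bullet> N0)" for u
  have k0: "k u = 0" for u
  proof -
    have o: "g (x u) \<bullet> g (x u) = 1" "vd g (x u) \<bullet> vd g (x u) = 1" "g (x u) \<bullet> vd g (x u) = 0"
      using bf by auto
    have "g (y u) \<bullet> N0 = (g (y u) \<bullet> g (x u)) * (N0 \<bullet> g (x u)) + (g (y u) \<bullet> vd g (x u)) * (N0 \<bullet> vd g (x u))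
        + (g (y u) \<bullet> cross3 (g (x u)) (vd g (x u))) * (N0 \<bullet> cross3 (g (x u)) (vd g (x u)))"
      by (rule frame_inner[OF o])
    moreover have "g (y u) \<bullet> cross3 (g (x u)) (vd g (x u)) = 0"
      using pi_n1[OF G, of u] by (simp add: inner_commute)
    ultimately show ?thesis unfolding k_def by (simp add: inner_commute)
  qed
  have hP: "((\<lambda>u. g (x u)) has_vector_derivative (xd *\<^sub>R TP)) (at t)"
    unfolding xd_def TP_def by (rule chain_x[OF hx bf(1)])
  have hQ: "((\<lambda>u. g (y u)) has_vector_derivative (yd *\<^sub>R TQ)) (at t)"
    unfolding yd_def TQ_def by (rule chain_x[OF hy bf(1)])
  have hTP: "((\<lambda>u. vd g (x u)) has_vector_derivative (xd *\<^sub>R GP)) (at t)"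
    unfolding xd_def GP_def by (rule chain_x[OF hx bf(2)])
  have hN: "((\<lambda>u. N0) has_vector_derivative 0) (at t)" by (rule has_vector_derivative_const)
  have dA: "((\<lambda>u. g (y u) \<bullet> N0) has_real_derivative (yd * (TQ \<bullet> N0))) (at t)"
    using inner_vd[OF hQ hN] by simp
  have dB: "((\<lambda>u. g (x u) \<bullet> g (y u)) has_real_derivative (P \<bullet> (yd *\<^sub>R TQ) + (xd *\<^sub>R TP) \<bullet> Q)) (at t)"
    using inner_vd[OF hP hQ] unfolding P_def Q_def .
  have dC: "((\<lambda>u. g (x u) \<bullet> N0) has_real_derivative (xd * (TP \<bullet> N0))) (at t)"
    using inner_vd[OF hP hN] by simp
  have dD: "((\<lambda>u. vd g (x u) \<bullet> g (y u)) has_real_derivative (TP \<bullet> (yd *\<^sub>R TQ) + (xd *\<^sub>R GP) \<bullet> Q)) (at t)"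
    using inner_vd[OF hTP hQ] unfolding TP_def Q_def .
  have dE: "((\<lambda>u. vd g (x u) \<bullet> N0) has_real_derivative (xd * (GP \<bullet> N0))) (at t)"
    using inner_vd[OF hTP hN] by simp
  have PN: "P \<bullet> N0 = 0" "TP \<bullet> N0 = 0" unfolding N0_def by (simp_all add: dot_cross_self)
  have dk: "(k has_real_derivative (yd * (TQ \<bullet> N0) - ((P \<bullet> (yd *\<^sub>R TQ) + (xd *\<^sub>R TP) \<bullet> Q) * (P \<bullet> N0) + (xd * (TP \<bullet> N0)) * c)
       - ((TP \<bullet> (yd *\<^sub>R TQ) + (xd *\<^sub>R GP) \<bullet> Q) * (TP \<bullet> N0) + (xd * (GP \<bullet> N0)) * (TP \<bullet> Q)))) (at t)"
    unfolding k_def[abs_def]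
    using DERIV_diff[OF DERIV_diff[OF dA DERIV_mult[OF dB dC]] DERIV_mult[OF dD dE]]
    unfolding P_def Q_def TP_def c_def by simp
  have "yd * (TQ \<bullet> N0) - ((P \<bullet> (yd *\<^sub>R TQ) + (xd *\<^sub>R TP) \<bullet> Q) * (P \<bullet> N0) + (xd * (TP \<bullet> N0)) * c)
       - ((TP \<bullet> (yd *\<^sub>R TQ) + (xd *\<^sub>R GP) \<bullet> Q) * (TP \<bullet> N0) + (xd * (GP \<bullet> N0)) * (TP \<bullet> Q)) = 0"
    by (rule deriv_zero_of_const[OF dk k0])
  hence "s * (xd * (GP \<bullet> N0)) = 0" using tn PN C1 by auto
  hence "GP \<bullet> N0 = 0" using s0 xp unfolding xd_def by simp
  thus ?thesis unfolding geod_curv_def GP_def N0_def P_def TP_def by (simp add: inner_commute)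
qed

lemma per_nat: assumes "\<And>s. f (s + L) = f s" shows "f (s + real n * L) = f s"
proof (induction n arbitrary: s)
  case (Suc n)
  have "f (s + real (Suc n) * L) = f ((s + real n * L) + L)" by (simp add: algebra_simps)
  also have "\<dots> = f (s + real n * L)" by (rule assms)
  finally show ?case using Suc by simp
qed simp

lemma per_int: assumes "\<And>s. f (s + L) = f s" shows "f (s + real_of_int k * L) = f s"
proof (cases "k \<ge> 0")
  case True
  then obtain n where "k = int n" using nonneg_int_cases by blast
  thus ?thesis using per_nat[of f L, OF assms] by simp
next
  case False
  define n where "n = nat (- k)"
  have n: "k = - int n" using False unfolding n_def by simp
  have "f s = f ((s + real_of_int k * L) + real n * L)" using n by simp
  also have "\<dots> = f (s + real_of_int k * L)" by (rule per_nat[of f L, OF assms])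
  finally show ?thesis by simp
qed

lemma per_vd:
  assumes "\<And>s. f (s + L) = f s" "\<And>s. (f has_vector_derivative vd f s) (at s)"
  shows "vd f (s + L) = vd f s"
proof -
  have h: "((\<lambda>u. u + L) has_real_derivative 1) (at s)" by (auto intro!: derivative_eq_intros)
  have "((\<lambda>u. f (u + L)) has_vector_derivative (1 *\<^sub>R vd f (s + L))) (at s)"
    using chain_x[OF h assms(2)[of "s + L"]] .
  hence "(f has_vector_derivative vd f (s + L)) (at s)" using assms(1) by simp
  thus ?thesis using assms(2)[of s] vector_derivative_unique_at by blast
qed

lemma kappa_per:
  assumes sc: "sphere_closed_curve g L"
  shows "geod_curv g (s + L) = geod_curv g s"
proof -
  note bf = basic_facts[OF sc]
  have p0: "g (s + L) = g s" for s using sc unfolding sphere_closed_curve_def by auto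
  have p1: "vd g (s + L) = vd g s" for s by (rule per_vd[OF p0 bf(1)])
  have p2: "vd (vd g) (s + L) = vd (vd g) s" for s by (rule per_vd[OF p1 bf(2)])
  show ?thesis unfolding geod_curv_def p0 p1 p2 ..
qed

lemma red_props:
  fixes a L :: real assumes "L > 0"
  shows "0 \<le> a - real_of_int \<lfloor>a / L\<rfloor> * L" "a - real_of_int \<lfloor>a / L\<rfloor> * L < L"
proof -
  have f1: "real_of_int \<lfloor>a / L\<rfloor> \<le> a / L" by (rule of_int_floor_le)
  have f2: "a / L < real_of_int \<lfloor>a / L\<rfloor> + 1" by linarith
  have "real_of_int \<lfloor>a / L\<rfloor> * L \<le> (a / L) * L" using mult_right_mono[OF f1, of L] assms by simp
  moreover have "(a / L) * L < (real_of_int \<lfloor>a / L\<rfloor> + 1) * L" using mult_strict_right_mono[OF f2 assms] .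
  moreover have "(a / L) * L = a" using assms by simp
  ultimately have "real_of_int \<lfloor>a / L\<rfloor> * L \<le> a" "a < (real_of_int \<lfloor>a / L\<rfloor> + 1) * L" by simp_all
  thus "0 \<le> a - real_of_int \<lfloor>a / L\<rfloor> * L" "a - real_of_int \<lfloor>a / L\<rfloor> * L < L"
    by (simp_all add: algebra_simps)
qed

lemma kappa_all_zero:
  assumes G: "gutkin g L pi x y"
  shows "geod_curv g s = 0"
proof -
  have sc: "sphere_closed_curve g L" using G unfolding gutkin_def convex_sphere_curve_def by auto
  have L0: "L > 0" and inj: "inj_on g {0..<L}" and p0: "\<And>s. g (s + L) = g s"
    using sc unfolding sphere_closed_curve_def by auto
  define r where "r a = a - real_of_int \<lfloor>a / L\<rfloor> * L" for a
  have rin: "r a \<in> {0..<L}" for a using red_props[OF L0, of a] unfolding r_def by auto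
  have rshift: "r a + real_of_int \<lfloor>a / L\<rfloor> * L = a" for a unfolding r_def by simp
  have gr: "g (r a) = g a" for a using per_int[of g L, OF p0, of "r a" "\<lfloor>a / L\<rfloor>"] rshift[of a] by simp
  have kr: "geod_curv g (r a) = geod_curv g a" for a
    using per_int[of "geod_curv g" L "r a" "\<lfloor>a / L\<rfloor>"] kappa_per[OF sc] rshift[of a] by simp
  have "g s \<in> range (g \<circ> x)" using G unfolding gutkin_def by auto
  then obtain t where "g s = g (x t)" by auto
  hence "g (r s) = g (r (x t))" using gr by simp
  hence eq: "r s = r (x t)" by (rule inj_onD[OF inj]) (use rin in auto)
  have "geod_curv g s = geod_curv g (r s)" using kr[of s] by simp
  also have "\<dots> = geod_curv g (r (x t))" using eq by simp
  also have "\<dots> = geod_curv g (x t)" using kr[of "x t"] by simp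
  finally have "geod_curv g s = geod_curv g (x t)" .
  thus ?thesis using pi_kappa[OF G] by simp
qed

lemma no_great:
  assumes sc: "sphere_closed_curve g L" and hn: "\<And>s. g s \<bullet> n > 0" and k0: "\<And>s. geod_curv g s = 0"
  shows False
proof -
  note bf = basic_facts[OF sc]
  have GG: "vd (vd g) s = - g s" for s
  proof -
    have o: "g s \<bullet> g s = 1" "vd g s \<bullet> vd g s = 1" "g s \<bullet> vd g s = 0" using bf by auto
    have "vd (vd g) s = (vd (vd g) s \<bullet> g s) *\<^sub>R g s + (vd (vd g) s \<bullet> vd g s) *\<^sub>R vd g s
       + (vd (vd g) s \<bullet> cross3 (g s) (vd g s)) *\<^sub>R cross3 (g s) (vd g s)"
      by (rule frame[OF o])
    moreover have "vd (vd g) s \<bullet> cross3 (g s) (vd g s) = 0"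
      using k0[of s] unfolding geod_curv_def by (simp add: inner_commute)
    ultimately show ?thesis using bf by simp
  qed
  have hc: "((\<lambda>u. n) has_vector_derivative 0) (at s)" for s by (rule has_vector_derivative_const)
  define W where "W u = (vd g u \<bullet> n) * sin u - (g u \<bullet> n) * cos u" for u
  have dW: "(W has_real_derivative 0) (at s)" for s
  proof -
    have d1: "((\<lambda>u. vd g u \<bullet> n) has_real_derivative (- (g s \<bullet> n))) (at s)"
      using inner_vd[OF bf(2) hc, of s] GG[of s] by simp
    have d2: "((\<lambda>u. g u \<bullet> n) has_real_derivative (vd g s \<bullet> n)) (at s)"
      using inner_vd[OF bf(1) hc, of s] by simp
    show ?thesis unfolding W_def[abs_def]
      by (rule DERIV_cong[OF DERIV_diff[OF DERIV_mult[OF d1 DERIV_sin[of s]] DERIV_mult[OF d2 DERIV_cos[of s]]]]) simp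
  qed
  have "W 0 = W pi" by (rule DERIV_isconst_all) (use dW in auto)
  moreover have "W 0 < 0" unfolding W_def using hn[of 0] by simp
  moreover have "W pi > 0" unfolding W_def using hn[of pi] by simp
  ultimately show False by simp
qed


theorem mainTheorem4:
  fixes g :: "real \<Rightarrow> real^3" and L \<alpha> :: real and x y :: "real \<Rightarrow> real"
  assumes "gutkin g L \<alpha> x y"
  shows "(\<forall>t. deriv y t / deriv x t =
            sqrt ((geod_curv g (x t))\<^sup>2 + (sin \<alpha>)\<^sup>2) / sqrt ((geod_curv g (y t))\<^sup>2 + (sin \<alpha>)\<^sup>2))
       \<and> (\<forall>a. (\<forall>t. deriv x t = a / sqrt ((geod_curv g (x t))\<^sup>2 + (sin \<alpha>)\<^sup>2)) \<longrightarrow>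
              (\<forall>t. deriv y t = a / sqrt ((geod_curv g (y t))\<^sup>2 + (sin \<alpha>)\<^sup>2)))"
proof -
  note G = assms
  have sc: "sphere_closed_curve g L" using G unfolding gutkin_def convex_sphere_curve_def by auto
  obtain n where hn: "\<And>s. g s \<bullet> n > 0" using G unfolding gutkin_def convex_sphere_curve_def by auto
  have a0: "0 < \<alpha>" "\<alpha> \<le> pi" using G unfolding gutkin_def by auto
  have xp: "\<And>t. deriv x t > 0" and yp: "\<And>t. deriv y t > 0" using G unfolding gutkin_def by auto
  show ?thesis
  proof (cases "\<alpha> = pi")
    case True
    hence G': "gutkin g L pi x y" using G by simp
    have False by (rule no_great[OF sc hn kappa_all_zero[OF G']])
    thus ?thesis ..
  next
    case False
    hence ap: "\<alpha> < pi" using a0 by simp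
    have sa: "sin \<alpha> > 0" using a0 ap by (simp add: sin_gt_zero)
    have ratio: "deriv y t / deriv x t =
            sqrt ((geod_curv g (x t))\<^sup>2 + (sin \<alpha>)\<^sup>2) / sqrt ((geod_curv g (y t))\<^sup>2 + (sin \<alpha>)\<^sup>2)" for t
    proof -
      define A where "A = (geod_curv g (x t))\<^sup>2 + (sin \<alpha>)\<^sup>2"
      define B where "B = (geod_curv g (y t))\<^sup>2 + (sin \<alpha>)\<^sup>2"
      have A0: "A > 0" unfolding A_def using sa by (simp add: add_nonneg_pos)
      have B0: "B > 0" unfolding B_def using sa by (simp add: add_nonneg_pos)
      have e: "(deriv y t)^2 * B = (deriv x t)^2 * A"
        using gen_case[OF G ap, of t] unfolding A_def B_def .
      have "(deriv y t / deriv x t)^2 = A / B"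
        using e xp[of t] B0 by (simp add: field_simps power_divide)
      moreover have "deriv y t / deriv x t > 0" using xp[of t] yp[of t] by simp
      ultimately have "deriv y t / deriv x t = sqrt (A / B)"
        by (metis abs_of_pos real_sqrt_abs)
      thus ?thesis unfolding A_def B_def by (simp add: real_sqrt_divide)
    qed
    have part2: "deriv y t = a / sqrt ((geod_curv g (y t))\<^sup>2 + (sin \<alpha>)\<^sup>2)"
      if h: "\<forall>t. deriv x t = a / sqrt ((geod_curv g (x t))\<^sup>2 + (sin \<alpha>)\<^sup>2)" for a t
    proof -
      define A where "A = sqrt ((geod_curv g (x t))\<^sup>2 + (sin \<alpha>)\<^sup>2)"
      define B where "B = sqrt ((geod_curv g (y t))\<^sup>2 + (sin \<alpha>)\<^sup>2)"
      have A0: "A > 0" unfolding A_def using sa by (simp add: add_nonneg_pos)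
      have "deriv y t = (deriv y t / deriv x t) * deriv x t" using xp[of t] by simp
      also have "\<dots> = (A / B) * (a / A)" using ratio[of t] h unfolding A_def B_def by simp
      also have "\<dots> = a / B" using A0 by simp
      finally show ?thesis unfolding B_def .
    qed
    show ?thesis using ratio part2 by blast
  qed
qed

end
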